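(* Let $T$ be a decomposition tree of a distance-hereditary graph $G$ and let $v$ be an internal node of $T$. Suppose that (1) $\hat\gamma_0(v)=\hat{min}(v)+\hat\alpha(v)$; (2) $\hat\gamma_{|\hat{TS}(v)|}(v)=\hat{min}(v)+|\hat{TS}(v)|-\hat\beta(v)$; and (3) $\hat\gamma_{\hat\alpha(v)+2i}(v)=\hat{min}(v)$ for all integers $0\le i\le(\hat\beta(v)-\hat\alpha(v))/2$. Then for every integer $0\le k\le|\hat{TS}(v)|$, $$\hat\gamma_k(v)=\begin{cases}\hat{min}(v)+\hat\alpha(v)-k & \text{if } 0\le k\le\hat\alpha(v),\\ \hat{min}(v)+k-\hat\beta(v) & \text{if } \hat\beta(v)\le k\le|\hat{TS}(v)|,\\ \hat{min}(v) & \text{if } \hat\alpha(v)<k<\hat\beta(v)\text{ and } k-\hat\alpha(v)\text{ is even},\\ \hat{min}(v)+1 & \text{otherwise.}\end{cases}$$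
   Context: All graphs are finite, simple, undirected. For a graph $H$ and $S\subseteq V(H)$, $N_H[S]$ is $S$ together with all vertices adjacent to a vertex of $S$, and $H[S]$ is the induced subgraph. Graphs carry a "twin set": a single-vertex graph on $x$ has twin set $\{x\}$. For vertex-disjoint graphs $G_l,G_r$ with twin sets $TS(G_l),TS(G_r)$: the true twin operation $G_l\otimes G_r$ has vertex set $V(G_l)\cup V(G_r)$, edge set $E(G_l)\cup E(G_r)\cup\{uw: u\in TS(G_l), w\in TS(G_r)\}$ and twin set $TS(G_l)\cup TS(G_r)$; the false twin operation $G_l\odot G_r$ has vertex set $V(G_l)\cup V(G_r)$, edge set $E(G_l)\cup E(G_r)$, twin set $TS(G_l)\cup TS(G_r)$; the attachment operation $G_l\oplus G_r$ has the same vertex and edge sets as $G_l\otimes G_r$ and twin set $TS(G_l)$. A decomposition tree $T$ of $G$ is a rooted binary tree whose leaves are in bijection with $V(G)$, each internal node having a left and a right child and a label in $\{\otimes,\odot,\oplus\}$; for each node $v$ define $\hat G(v)$ and $\hat{TS}(v)$ recursively: for a leaf $x$, the single-vertex graph on $x$ with twin set $\{x\}$; for an internal node $v$ with label $\circ$ and children $v_l,v_r$, $\hat G(v)=\hat G(v_l)\circ\hat G(v_r)$ with the corresponding twin set; one requires $\hat G(\text{root})=G$. Then $\hat G(v)$ is the subgraph of $G$ induced by the set $\hat V(v)$ of leaves below $v$. For a node $v$ and $0\le k\le|\hat{TS}(v)|$, call $S\subseteq\hat V(v)$ $k$-feasible if $\hat V(v)\setminus\hat{TS}(v)\subseteq N_{\hat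 G(v)}[S]$ and there is $X\subseteq S\cap\hat{TS}(v)$ with $|X|=k$ such that $\hat G(v)[S\setminus X]$ has a perfect matching. $\hat\gamma_k(v)$ is the minimum size of a $k$-feasible set. $\hat{min}(v)=\min\{\hat\gamma_k(v):0\le k\le|\hat{TS}(v)|\}$, and $\hat\alpha(v)$, $\hat\beta(v)$ are the smallest and the largest $k$ with $\hat\gamma_k(v)=\hat{min}(v)$. *)

theory Defs
  imports Main
begin

definition simple_graph :: "'a set \<Rightarrow> 'a set set \<Rightarrow> bool" where
  "simple_graph V E \<longleftrightarrow> finite V \<and> (\<forall>e\<in>E. \<exists>x y. x \<in> V \<and> y \<in> V \<and> x \<noteq> y \<and> e = {x, y})"

definition walk_len :: "'a set \<Rightarrow> 'a set set \<Rightarrow> 'a \<Rightarrow> 'a \<Rightarrow> nat \<Rightarrow> bool" where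
  "walk_len W E u v n \<longleftrightarrow> (\<exists>xs. xs \<noteq> [] \<and> hd xs = u \<and> last xs = v \<and> set xs \<subseteq> W
      \<and> successively (\<lambda>x y. {x, y} \<in> E) xs \<and> length xs = Suc n)"

definition gdist :: "'a set \<Rightarrow> 'a set set \<Rightarrow> 'a \<Rightarrow> 'a \<Rightarrow> nat" where
  "gdist W E u v = (LEAST n. walk_len W E u v n)"

definition connected_on :: "'a set \<Rightarrow> 'a set set \<Rightarrow> bool" where
  "connected_on W E \<longleftrightarrow> (\<forall>u\<in>W. \<forall>v\<in>W. \<exists>n. walk_len W E u v n)"

definition distance_hereditary :: "'a set \<Rightarrow> 'a set set \<Rightarrow> bool" where
  "distance_hereditary V E \<longleftrightarrow> simple_graph V E \<and>
     (\<forall>W. W \<subseteq> V \<and> W \<noteq> {} \<and> connected_on W E \<longrightarrow>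
        (\<forall>u\<in>W. \<forall>v\<in>W. gdist W E u v = gdist V E u v))"

definition closed_nbhd :: "'a set \<Rightarrow> 'a set set \<Rightarrow> 'a set \<Rightarrow> 'a set" where
  "closed_nbhd V E S = S \<union> {x \<in> V. \<exists>s\<in>S. {x, s} \<in> E}"

definition has_perfect_matching_on :: "'a set set \<Rightarrow> 'a set \<Rightarrow> bool" where
  "has_perfect_matching_on E W \<longleftrightarrow> (\<exists>M \<subseteq> E. (\<forall>e\<in>M. e \<subseteq> W)
      \<and> (\<forall>e1\<in>M. \<forall>e2\<in>M. e1 \<noteq> e2 \<longrightarrow> e1 \<inter> e2 = {}) \<and> \<Union>M = W)"

datatype dt_op = TrueTwin | FalseTwin | Attach

datatype 'a dtree = Leaf 'a | Node dt_op "'a dtree" "'a dtree"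

fun tverts :: "'a dtree \<Rightarrow> 'a set" where
  "tverts (Leaf x) = {x}"
| "tverts (Node _ l r) = tverts l \<union> tverts r"

fun tts :: "'a dtree \<Rightarrow> 'a set" where
  "tts (Leaf x) = {x}"
| "tts (Node TrueTwin l r) = tts l \<union> tts r"
| "tts (Node FalseTwin l r) = tts l \<union> tts r"
| "tts (Node Attach l r) = tts l"

fun tedges :: "'a dtree \<Rightarrow> 'a set set" where
  "tedges (Leaf x) = {}"
| "tedges (Node FalseTwin l r) = tedges l \<union> tedges r"
| "tedges (Node _ l r) = tedges l \<union> tedges r \<union> {{u, w} | u w. u \<in> tts l \<and> w \<in> tts r}"

text \<open>Leaves are in bijection with vertices: children have disjoint leaf sets.\<close>
fun dt_wf :: "'a dtree \<Rightarrow> bool" where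
  "dt_wf (Leaf x) = True"
| "dt_wf (Node _ l r) = (dt_wf l \<and> dt_wf r \<and> tverts l \<inter> tverts r = {})"

fun subtrees :: "'a dtree \<Rightarrow> 'a dtree set" where
  "subtrees (Leaf x) = {Leaf x}"
| "subtrees (Node c l r) = insert (Node c l r) (subtrees l \<union> subtrees r)"

definition is_decomposition_tree :: "'a dtree \<Rightarrow> 'a set \<Rightarrow> 'a set set \<Rightarrow> bool" where
  "is_decomposition_tree T V E \<longleftrightarrow> dt_wf T \<and> tverts T = V \<and> tedges T = E"

definition is_internal :: "'a dtree \<Rightarrow> bool" where
  "is_internal v \<longleftrightarrow> (\<exists>c l r. v = Node c l r)"

definition k_feasible :: "'a dtree \<Rightarrow> nat \<Rightarrow> 'a set \<Rightarrow> bool" where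
  "k_feasible v k S \<longleftrightarrow> S \<subseteq> tverts v
     \<and> tverts v - tts v \<subseteq> closed_nbhd (tverts v) (tedges v) S
     \<and> (\<exists>X. X \<subseteq> S \<inter> tts v \<and> card X = k \<and> has_perfect_matching_on (tedges v) (S - X))"

definition hgamma :: "'a dtree \<Rightarrow> nat \<Rightarrow> nat" where
  "hgamma v k = Inf (card ` {S. k_feasible v k S})"

definition hmin :: "'a dtree \<Rightarrow> nat" where
  "hmin v = Min (hgamma v ` {0..card (tts v)})"

definition halpha :: "'a dtree \<Rightarrow> nat" where
  "halpha v = Min {k. k \<le> card (tts v) \<and> hgamma v k = hmin v}"

definition hbeta :: "'a dtree \<Rightarrow> nat" where
  "hbeta v = Max {k. k \<le> card (tts v) \<and> hgamma v k = hmin v}"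

end

theory Submission
  imports Defs
begin

lemma tverts_finite: "finite (tverts t)"
  by (induction t) auto

lemma tts_sub: "tts t \<subseteq> tverts t"
  by (induction t rule: tts.induct) auto

lemma tts_ne: "tts t \<noteq> {}"
  by (induction t rule: tts.induct) auto

lemma tedges_form: "dt_wf t \<Longrightarrow> e \<in> tedges t \<Longrightarrow>
   \<exists>a b. a \<noteq> b \<and> a \<in> tverts t \<and> b \<in> tverts t \<and> e = {a,b}"
proof (induction t arbitrary: e)
  case (Leaf x)
  then show ?case by simp
next
  case (Node c l r)
  have wl: "dt_wf l" and wr: "dt_wf r" and dj: "tverts l \<inter> tverts r = {}" using Node.prems by auto
  have L: "\<exists>a b. a \<noteq> b \<and> a \<in> tverts (Node c l r) \<and> b \<in> tverts (Node c l r) \<and> e = {a,b}"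
    if "e \<in> tedges l" using Node.IH(1)[OF wl that] by auto
  have R: "\<exists>a b. a \<noteq> b \<and> a \<in> tverts (Node c l r) \<and> b \<in> tverts (Node c l r) \<and> e = {a,b}"
    if "e \<in> tedges r" using Node.IH(2)[OF wr that] by auto
  have C: "\<exists>a b. a \<noteq> b \<and> a \<in> tverts (Node c l r) \<and> b \<in> tverts (Node c l r) \<and> e = {a,b}"
    if ee: "e \<in> {{u, w} | u w. u \<in> tts l \<and> w \<in> tts r}"
  proof -
    obtain u w where uw: "e = {u,w}" "u \<in> tts l" "w \<in> tts r" using ee by blast
    have "u \<in> tverts l" "w \<in> tverts r" using uw tts_sub[of l] tts_sub[of r] by blast+
    then have "u \<noteq> w" using dj by blast
    then show ?thesis using uw \<open>u \<in> tverts l\<close> \<open>w \<in> tverts r\<close> by auto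
  qed
  show ?case
  proof (cases c)
    case FalseTwin
    then show ?thesis using Node.prems L R by auto
  next
    case TrueTwin
    then have "e \<in> tedges l \<or> e \<in> tedges r \<or> e \<in> {{u, w} | u w. u \<in> tts l \<and> w \<in> tts r}"
      using Node.prems by simp
    then show ?thesis using L R C by blast
  next
    case Attach
    then have "e \<in> tedges l \<or> e \<in> tedges r \<or> e \<in> {{u, w} | u w. u \<in> tts l \<and> w \<in> tts r}"
      using Node.prems by simp
    then show ?thesis using L R C by blast
  qed
qed

lemma tedges_nbr: "z \<in> tverts t \<Longrightarrow> z \<notin> tts t \<Longrightarrow> \<exists>w. {z,w} \<in> tedges t"
proof (induction t arbitrary: z)
  case (Leaf x)
  then show ?case by simp
next
  case (Node c l r)
  have sub: "tedges l \<union> tedges r \<subseteq> tedges (Node c l r)" by (cases c) auto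
  show ?case
  proof (cases "c = Attach")
    case False
    then have "tts (Node c l r) = tts l \<union> tts r" by (cases c) auto
    then have "z \<in> tverts l \<and> z \<notin> tts l \<or> z \<in> tverts r \<and> z \<notin> tts r" using Node.prems by auto
    then obtain w where "{z,w} \<in> tedges l \<or> {z,w} \<in> tedges r" using Node.IH by blast
    then show ?thesis using sub by blast
  next
    case c: True
    show ?thesis
    proof (cases "z \<in> tverts l")
      case True
      then obtain w where "{z,w} \<in> tedges l" using Node c by auto
      then show ?thesis using sub by blast
    next
      case False
      then have zr: "z \<in> tverts r" using Node by auto
      show ?thesis
      proof (cases "z \<in> tts r")
        case True
        obtain u where "u \<in> tts l" using tts_ne[of l] by blast
        then have "{z,u} \<in> tedges (Node Attach l r)" using True by (auto simp: insert_commute)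
        then show ?thesis using c by blast
      next
        case False
        then obtain w where "{z,w} \<in> tedges r" using Node.IH zr by blast
        then show ?thesis using sub by blast
      qed
    qed
  qed
qed

lemma subtrees_wf: "t \<in> subtrees T \<Longrightarrow> dt_wf T \<Longrightarrow> dt_wf t"
  by (induction T) auto

lemma pm_elim:
  assumes "has_perfect_matching_on E W"
  obtains M where "M \<subseteq> E" "\<forall>e\<in>M. e \<subseteq> W" "\<forall>e1\<in>M. \<forall>e2\<in>M. e1 \<noteq> e2 \<longrightarrow> e1 \<inter> e2 = {}" "\<Union>M = W"
  using assms unfolding has_perfect_matching_on_def by (elim exE conjE) (rule that)

lemma pm_intro:
  assumes "M \<subseteq> E" "\<forall>e\<in>M. e \<subseteq> W" "\<forall>e1\<in>M. \<forall>e2\<in>M. e1 \<noteq> e2 \<longrightarrow> e1 \<inter> e2 = {}" "\<Union>M = W"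
  shows "has_perfect_matching_on E W"
  unfolding has_perfect_matching_on_def using assms by (intro exI[of _ M] conjI)

lemma kf_elim:
  assumes "k_feasible v k S"
  obtains X M where "S \<subseteq> tverts v" "tverts v - tts v \<subseteq> closed_nbhd (tverts v) (tedges v) S"
    "X \<subseteq> S \<inter> tts v" "card X = k"
    "M \<subseteq> tedges v" "\<forall>e\<in>M. e \<subseteq> S - X" "\<forall>e1\<in>M. \<forall>e2\<in>M. e1 \<noteq> e2 \<longrightarrow> e1 \<inter> e2 = {}" "\<Union>M = S - X"
proof -
  have S: "S \<subseteq> tverts v" and D: "tverts v - tts v \<subseteq> closed_nbhd (tverts v) (tedges v) S"
    and "\<exists>X. X \<subseteq> S \<inter> tts v \<and> card X = k \<and> has_perfect_matching_on (tedges v) (S - X)"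
    using assms unfolding k_feasible_def by simp_all
  then obtain X where X: "X \<subseteq> S \<inter> tts v" "card X = k"
    and pm: "has_perfect_matching_on (tedges v) (S - X)" by blast
  from pm obtain M where "M \<subseteq> tedges v" "\<forall>e\<in>M. e \<subseteq> S - X"
       "\<forall>e1\<in>M. \<forall>e2\<in>M. e1 \<noteq> e2 \<longrightarrow> e1 \<inter> e2 = {}" "\<Union>M = S - X"
    by (rule pm_elim)
  then show ?thesis using that S D X by blast
qed

lemma kf_intro:
  assumes "S \<subseteq> tverts v" "tverts v - tts v \<subseteq> closed_nbhd (tverts v) (tedges v) S"
    "X \<subseteq> S \<inter> tts v" "card X = k"
    "M \<subseteq> tedges v" "\<forall>e\<in>M. e \<subseteq> S - X" "\<forall>e1\<in>M. \<forall>e2\<in>M. e1 \<noteq> e2 \<longrightarrow> e1 \<inter> e2 = {}" "\<Union>M = S - X"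
  shows "k_feasible v k S"
  unfolding k_feasible_def using assms pm_intro[of M "tedges v" "S - X"] by blast

lemma disj_insert:
  assumes "\<forall>e1\<in>M. \<forall>e2\<in>M. e1 \<noteq> e2 \<longrightarrow> e1 \<inter> e2 = {}" "\<forall>e\<in>M. a \<inter> e = {}"
  shows "\<forall>e1\<in>insert a M. \<forall>e2\<in>insert a M. e1 \<noteq> e2 \<longrightarrow> e1 \<inter> e2 = {}"
proof (intro ballI impI)
  fix e1 e2 assume "e1 \<in> insert a M" "e2 \<in> insert a M" "e1 \<noteq> e2"
  then show "e1 \<inter> e2 = {}" using assms by (auto simp: Int_commute)
qed

lemma disj_sub:
  assumes "\<forall>e1\<in>M. \<forall>e2\<in>M. e1 \<noteq> e2 \<longrightarrow> e1 \<inter> e2 = {}" "N \<subseteq> M"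
  shows "\<forall>e1\<in>N. \<forall>e2\<in>N. e1 \<noteq> e2 \<longrightarrow> e1 \<inter> e2 = {}"
  using assms by blast

lemma cn_iff: "z \<in> closed_nbhd V E S \<longleftrightarrow> z \<in> S \<or> (z \<in> V \<and> (\<exists>s\<in>S. {z,s} \<in> E))"
  by (auto simp: closed_nbhd_def)

context
  fixes v :: "'a dtree"
  assumes finV: "finite (tverts v)"
    and tsV: "tts v \<subseteq> tverts v"
    and edg: "\<And>e. e \<in> tedges v \<Longrightarrow> \<exists>a b. a \<noteq> b \<and> a \<in> tverts v \<and> b \<in> tverts v \<and> e = {a,b}"
    and nbr: "\<And>z. z \<in> tverts v \<Longrightarrow> z \<notin> tts v \<Longrightarrow> \<exists>w. {z,w} \<in> tedges v"
begin

lemma eV: "e \<in> tedges v \<Longrightarrow> e \<subseteq> tverts v"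
  using edg by blast

lemma feas_down:
  assumes "k_feasible v (Suc k) S"
  shows "\<exists>S'. k_feasible v k S' \<and> card S' \<le> card S + 1"
proof -
  obtain X M where S: "S \<subseteq> tverts v"
    and D: "tverts v - tts v \<subseteq> closed_nbhd (tverts v) (tedges v) S"
    and X: "X \<subseteq> S \<inter> tts v" "card X = Suc k"
    and M: "M \<subseteq> tedges v" "\<forall>e\<in>M. e \<subseteq> S - X"
       "\<forall>e1\<in>M. \<forall>e2\<in>M. e1 \<noteq> e2 \<longrightarrow> e1 \<inter> e2 = {}" "\<Union>M = S - X"
    using assms by (rule kf_elim)
  have finS: "finite S" using S finV finite_subset by blast
  have finX: "finite X" using X(1) finS finite_subset by blast
  obtain u where u: "u \<in> X" using X(2) by (metis card.empty ex_in_conv nat.distinct(1))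
  show ?thesis
  proof (cases "\<exists>w. {u,w} \<in> tedges v \<and> w \<notin> S")
    case True
    then obtain w where w: "{u,w} \<in> tedges v" "w \<notin> S" by blast
    have wV: "w \<in> tverts v" using eV[OF w(1)] by blast
    have uS: "u \<in> S" using u X by blast
    let ?S = "insert w S" and ?X = "X - {u}" and ?M = "insert {u,w} M"
    have "k_feasible v k ?S"
    proof (rule kf_intro[of _ _ ?X _ ?M])
      show "?S \<subseteq> tverts v" using S wV by blast
      show "tverts v - tts v \<subseteq> closed_nbhd (tverts v) (tedges v) ?S"
        using D unfolding closed_nbhd_def by auto
      show "?X \<subseteq> ?S \<inter> tts v" using X by blast
      show "card ?X = k" using X u finX by simp
      show "?M \<subseteq> tedges v" using M w by blast
      show "\<forall>e\<in>?M. e \<subseteq> ?S - ?X" using M(2) uS w(2) X(1) by auto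
      have "\<forall>e\<in>M. {u,w} \<inter> e = {}" using M(2) u w(2) by blast
      then show "\<forall>e1\<in>?M. \<forall>e2\<in>?M. e1 \<noteq> e2 \<longrightarrow> e1 \<inter> e2 = {}" using M(3) by blast
      show "\<Union>?M = ?S - ?X" using M(4) uS u w(2) X(1) by auto
    qed
    moreover have "card ?S = card S + 1" using finS w(2) by simp
    ultimately show ?thesis by (intro exI[of _ ?S]) simp
  next
    case False
    have uS: "u \<in> S" "u \<in> tts v" using u X by blast+
    let ?S = "S - {u}" and ?X = "X - {u}"
    have "k_feasible v k ?S"
    proof (rule kf_intro[of _ _ ?X _ M])
      show "?S \<subseteq> tverts v" using S by blast
      show "tverts v - tts v \<subseteq> closed_nbhd (tverts v) (tedges v) ?S"
      proof
        fix z assume z: "z \<in> tverts v - tts v"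
        then have zu: "z \<noteq> u" using uS by blast
        have "z \<in> closed_nbhd (tverts v) (tedges v) S" using D z by blast
        then have "z \<in> S \<or> (\<exists>s\<in>S. {z, s} \<in> tedges v)" unfolding cn_iff by blast
        then show "z \<in> closed_nbhd (tverts v) (tedges v) ?S"
        proof
          assume "z \<in> S" then show ?thesis using zu unfolding cn_iff by simp
        next
          assume "\<exists>s\<in>S. {z, s} \<in> tedges v"
          then obtain s where s: "s \<in> S" "{z,s} \<in> tedges v" by blast
          show ?thesis
          proof (cases "s = u")
            case True
            then have "{u,z} \<in> tedges v" using s by (simp add: insert_commute)
            then have "z \<in> S" using False by blast
            then show ?thesis using zu unfolding cn_iff by simp
          next
            case False
            then have "s \<in> ?S" using s by simp
            then show ?thesis using s z unfolding cn_iff by blast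
          qed
        qed
      qed
      show "?X \<subseteq> ?S \<inter> tts v" using X by blast
      show "card ?X = k" using X u finX by simp
      show "M \<subseteq> tedges v" using M by blast
      show "\<forall>e\<in>M. e \<subseteq> ?S - ?X" using M(2) u by blast
      show "\<forall>e1\<in>M. \<forall>e2\<in>M. e1 \<noteq> e2 \<longrightarrow> e1 \<inter> e2 = {}" using M(3) by blast
      show "\<Union>M = ?S - ?X" using M(4) u by blast
    qed
    moreover have "card ?S \<le> card S + 1" by (rule order_trans[OF card_Diff1_le]) simp
    ultimately show ?thesis by blast
  qed
qed

lemma feas_up:
  assumes "k_feasible v k S" and "Suc k \<le> card (tts v)"
  shows "\<exists>S'. k_feasible v (Suc k) S' \<and> card S' \<le> card S + 1"
proof -
  obtain X M where S: "S \<subseteq> tverts v"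
    and D: "tverts v - tts v \<subseteq> closed_nbhd (tverts v) (tedges v) S"
    and X: "X \<subseteq> S \<inter> tts v" "card X = k"
    and M: "M \<subseteq> tedges v" "\<forall>e\<in>M. e \<subseteq> S - X"
       "\<forall>e1\<in>M. \<forall>e2\<in>M. e1 \<noteq> e2 \<longrightarrow> e1 \<inter> e2 = {}" "\<Union>M = S - X"
    using assms(1) by (rule kf_elim)
  have finS: "finite S" using S finV finite_subset by blast
  have finX: "finite X" using X(1) finS finite_subset by blast
  have finT: "finite (tts v)" using tsV finV finite_subset by blast
  have Dmono: "tverts v - tts v \<subseteq> closed_nbhd (tverts v) (tedges v) (insert w S)" for w
    using D unfolding closed_nbhd_def by auto
  show ?thesis
  proof (cases "\<exists>z \<in> tts v. z \<notin> S")
    case True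
    then obtain z where z: "z \<in> tts v" "z \<notin> S" by blast
    have zX: "z \<notin> X" using z X by blast
    let ?S = "insert z S" and ?X = "insert z X"
    have "k_feasible v (Suc k) ?S"
    proof (rule kf_intro[of _ _ ?X _ M])
      show "?S \<subseteq> tverts v" using S z tsV by blast
      show "tverts v - tts v \<subseteq> closed_nbhd (tverts v) (tedges v) ?S" by (rule Dmono)
      show "?X \<subseteq> ?S \<inter> tts v" using X z by blast
      show "card ?X = Suc k" using X zX finX by simp
      show "M \<subseteq> tedges v" using M by blast
      show "\<forall>e\<in>M. e \<subseteq> ?S - ?X" using M(2) z by blast
      show "\<forall>e1\<in>M. \<forall>e2\<in>M. e1 \<noteq> e2 \<longrightarrow> e1 \<inter> e2 = {}" using M(3) by blast
      show "\<Union>M = ?S - ?X" using M(4) z by auto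
    qed
    moreover have "card ?S = card S + 1" using finS z by simp
    ultimately show ?thesis by (intro exI[of _ ?S]) simp
  next
    case False
    then have TS: "tts v \<subseteq> S" by blast
    have "\<not> tts v \<subseteq> X"
    proof
      assume "tts v \<subseteq> X"
      then have "card (tts v) \<le> card X" using finX by (rule card_mono[rotated])
      then show False using X(2) assms(2) by simp
    qed
    then obtain x where x: "x \<in> tts v" "x \<notin> X" by blast
    have xS: "x \<in> S" using x TS by blast
    then have "x \<in> \<Union>M" using M(4) x by blast
    then obtain e where e: "e \<in> M" "x \<in> e" by blast
    have eE: "e \<in> tedges v" using e M(1) by blast
    obtain a b where ab: "a \<noteq> b" "e = {a,b}" using edg[OF eE] by blast
    obtain y where y: "e = {x,y}" "x \<noteq> y"
    proof (cases "x = a")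
      case True
      then show ?thesis using that ab by blast
    next
      case False
      then have "x = b" using ab e by blast
      then show ?thesis using that[of a] ab by (simp add: insert_commute)
    qed
    have yS: "y \<in> S - X" using M(2) e y by blast
    have others: "\<forall>e'\<in>M - {e}. x \<notin> e' \<and> y \<notin> e'"
    proof
      fix e' assume e': "e' \<in> M - {e}"
      then have "e \<inter> e' = {}" using M(3) e(1) by blast
      then show "x \<notin> e' \<and> y \<notin> e'" using y(1) by blast
    qed
    have UM: "\<Union>(M - {e}) = S - X - {x,y}"
    proof -
      have "\<Union>(M - {e}) = \<Union>M - e" using M(3) e by blast
      then show ?thesis using M(4) y by simp
    qed
    show ?thesis
    proof (cases "\<exists>w. {y,w} \<in> tedges v \<and> w \<notin> S")
      case True
      then obtain w where w: "{y,w} \<in> tedges v" "w \<notin> S" by blast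
      have wV: "w \<in> tverts v" using eV[OF w(1)] by blast
      have wX: "w \<notin> X" "w \<noteq> x" using w(2) X(1) xS by blast+
      let ?S = "insert w S" and ?X = "insert x X" and ?M = "insert {y,w} (M - {e})"
      have "k_feasible v (Suc k) ?S"
      proof (rule kf_intro[of _ _ ?X _ ?M])
        show "?S \<subseteq> tverts v" using S wV by blast
        show "tverts v - tts v \<subseteq> closed_nbhd (tverts v) (tedges v) ?S" by (rule Dmono)
        show "?X \<subseteq> ?S \<inter> tts v" using X x xS by blast
        show "card ?X = Suc k" using X x finX by simp
        show "?M \<subseteq> tedges v" using M w by blast
        have "{y,w} \<subseteq> ?S - ?X" using yS y(2) wX by blast
        moreover have "\<forall>e'\<in>M - {e}. e' \<subseteq> ?S - ?X" using M(2) others by blast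
        ultimately show "\<forall>e'\<in>?M. e' \<subseteq> ?S - ?X" by blast
        have "\<forall>e'\<in>M - {e}. {y,w} \<inter> e' = {}" using others M(2) w(2) by blast
        moreover have "\<forall>e1\<in>M - {e}. \<forall>e2\<in>M - {e}. e1 \<noteq> e2 \<longrightarrow> e1 \<inter> e2 = {}"
          using M(3) by (rule disj_sub) blast
        ultimately show "\<forall>e1\<in>?M. \<forall>e2\<in>?M. e1 \<noteq> e2 \<longrightarrow> e1 \<inter> e2 = {}" by (intro disj_insert)
        show "\<Union>?M = ?S - ?X" using UM yS y(2) wX w(2) by auto
      qed
      moreover have "card ?S = card S + 1" using finS w(2) by simp
      ultimately show ?thesis by (intro exI[of _ ?S]) simp
    next
      case noext: False
      let ?S = "S - {y}" and ?X = "insert x X" and ?M = "M - {e}"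
      have "k_feasible v (Suc k) ?S"
      proof (rule kf_intro[of _ _ ?X _ ?M])
        show "?S \<subseteq> tverts v" using S by blast
        show "tverts v - tts v \<subseteq> closed_nbhd (tverts v) (tedges v) ?S"
        proof
          fix z assume z: "z \<in> tverts v - tts v"
          show "z \<in> closed_nbhd (tverts v) (tedges v) ?S"
          proof (cases "z = y")
            case True
            have "{y,x} \<in> tedges v" using eE y by (simp add: insert_commute)
            moreover have "x \<in> ?S" using xS y(2) by blast
            ultimately show ?thesis using True z unfolding cn_iff by blast
          next
            case zy: False
            have "z \<in> closed_nbhd (tverts v) (tedges v) S" using D z by blast
            then have "z \<in> S \<or> (\<exists>s\<in>S. {z, s} \<in> tedges v)" unfolding cn_iff by blast
            then show ?thesis
            proof
              assume "z \<in> S" then show ?thesis using zy unfolding cn_iff by simp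
            next
              assume "\<exists>s\<in>S. {z, s} \<in> tedges v"
              then obtain s where s: "s \<in> S" "{z,s} \<in> tedges v" by blast
              show ?thesis
              proof (cases "s = y")
                case True
                then have "{y,z} \<in> tedges v" using s by (simp add: insert_commute)
                then have "z \<in> S" using noext by blast
                then show ?thesis using zy unfolding cn_iff by simp
              next
                case False
                then have "s \<in> ?S" using s by simp
                then show ?thesis using s z unfolding cn_iff by blast
              qed
            qed
          qed
        qed
        show "?X \<subseteq> ?S \<inter> tts v" using X x xS y(2) yS by blast
        show "card ?X = Suc k" using X x finX by simp
        show "?M \<subseteq> tedges v" using M by blast
        show "\<forall>e'\<in>?M. e' \<subseteq> ?S - ?X" using M(2) others by blast
        show "\<forall>e1\<in>?M. \<forall>e2\<in>?M. e1 \<noteq> e2 \<longrightarrow> e1 \<inter> e2 = {}" using M(3) by blast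
        show "\<Union>?M = ?S - ?X" using UM by auto
      qed
      moreover have "card ?S \<le> card S + 1" by (rule order_trans[OF card_Diff1_le]) simp
      ultimately show ?thesis by blast
    qed
  qed
qed

lemma finE: "finite (tedges v)"
proof -
  have "tedges v \<subseteq> Pow (tverts v)" using eV by blast
  then show ?thesis using finV finite_subset by blast
qed

lemma feas_top: "\<exists>S. k_feasible v (card (tts v)) S"
proof -
  define P where "P n \<longleftrightarrow> (\<exists>M. M \<subseteq> tedges v \<and> (\<forall>e\<in>M. e \<inter> tts v = {})
      \<and> (\<forall>e1\<in>M. \<forall>e2\<in>M. e1 \<noteq> e2 \<longrightarrow> e1 \<inter> e2 = {}) \<and> card M = n)" for n
  have P0: "P 0" unfolding P_def by (intro exI[of _ "{}"]) simp
  have bnd: "\<forall>y. P y \<longrightarrow> y < Suc (card (tedges v))"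
    unfolding P_def using finE card_mono by (metis less_Suc_eq_le)
  obtain n where n: "P n" "\<forall>y. P y \<longrightarrow> y \<le> n"
    using ex_has_greatest_nat[of P 0 "\<lambda>x. x", OF P0 bnd] by blast
  then obtain M where M: "M \<subseteq> tedges v" "\<forall>e\<in>M. e \<inter> tts v = {}"
      "\<forall>e1\<in>M. \<forall>e2\<in>M. e1 \<noteq> e2 \<longrightarrow> e1 \<inter> e2 = {}" "card M = n"
    unfolding P_def by blast
  have finM: "finite M" using M(1) finE finite_subset by blast
  let ?S = "tts v \<union> \<Union>M"
  have "k_feasible v (card (tts v)) ?S"
  proof (rule kf_intro[of _ _ "tts v" _ M])
    show "?S \<subseteq> tverts v" using tsV M(1) eV by blast
    show "tts v \<subseteq> ?S \<inter> tts v" by blast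
    show "card (tts v) = card (tts v)" by simp
    show "M \<subseteq> tedges v" by (rule M(1))
    show "\<forall>e\<in>M. e \<subseteq> ?S - tts v" using M(2) by blast
    show "\<forall>e1\<in>M. \<forall>e2\<in>M. e1 \<noteq> e2 \<longrightarrow> e1 \<inter> e2 = {}" by (rule M(3))
    show "\<Union>M = ?S - tts v" using M(2) by blast
    show "tverts v - tts v \<subseteq> closed_nbhd (tverts v) (tedges v) ?S"
    proof
      fix z assume z: "z \<in> tverts v - tts v"
      show "z \<in> closed_nbhd (tverts v) (tedges v) ?S"
      proof (cases "z \<in> \<Union>M")
        case True
        then show ?thesis unfolding cn_iff by blast
      next
        case zM: False
        obtain w where w: "{z,w} \<in> tedges v" using nbr z by blast
        show ?thesis
        proof (cases "w \<in> ?S")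
          case True
          then show ?thesis using w z unfolding cn_iff by blast
        next
          case False
          let ?M = "insert {z,w} M"
          have new: "{z,w} \<notin> M" using zM by blast
          have "P (Suc n)" unfolding P_def
          proof (intro exI[of _ ?M] conjI)
            show "?M \<subseteq> tedges v" using M(1) w by blast
            show "\<forall>e\<in>?M. e \<inter> tts v = {}" using M(2) False z by blast
            have "\<forall>e\<in>M. {z,w} \<inter> e = {}" using zM False by blast
            then show "\<forall>e1\<in>?M. \<forall>e2\<in>?M. e1 \<noteq> e2 \<longrightarrow> e1 \<inter> e2 = {}"
              using M(3) by (intro disj_insert)
            show "card ?M = Suc n" using finM new M(4) by simp
          qed
          then show ?thesis using n(2) by fastforce
        qed
      qed
    qed
  qed
  then show ?thesis by blast
qed

lemma feas_all: "k \<le> card (tts v) \<Longrightarrow> \<exists>S. k_feasible v k S"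
proof (induction rule: inc_induct)
  case base
  then show ?case by (rule feas_top)
next
  case (step n)
  then show ?case using feas_down by blast
qed

lemma hg_le: "k_feasible v k S \<Longrightarrow> hgamma v k \<le> card S"
  unfolding hgamma_def by (rule cInf_lower) auto

lemma hg_attain: "k \<le> card (tts v) \<Longrightarrow> \<exists>S. k_feasible v k S \<and> card S = hgamma v k"
proof -
  assume "k \<le> card (tts v)"
  then obtain S where "k_feasible v k S" using feas_all by blast
  then have "card ` {S. k_feasible v k S} \<noteq> {}" by blast
  then have "hgamma v k \<in> card ` {S. k_feasible v k S}" unfolding hgamma_def by (rule Inf_nat_def1)
  then show ?thesis by auto
qed

lemma feas_parity: "k_feasible v k S \<Longrightarrow> even (card S + k)"
proof -
  assume "k_feasible v k S"
  then obtain X M where S: "S \<subseteq> tverts v"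
    and X: "X \<subseteq> S \<inter> tts v" "card X = k"
    and M: "M \<subseteq> tedges v" "\<forall>e1\<in>M. \<forall>e2\<in>M. e1 \<noteq> e2 \<longrightarrow> e1 \<inter> e2 = {}" "\<Union>M = S - X"
    by (rule kf_elim)
  have finS: "finite S" using S finV finite_subset by blast
  have c2: "card e = 2" if eM: "e \<in> M" for e
  proof -
    have "e \<in> tedges v" using M(1) eM by blast
    then obtain a b where "a \<noteq> b" "e = {a,b}" using edg by blast
    then show ?thesis by simp
  qed
  have pw: "pairwise disjnt M" using M(2) unfolding pairwise_def disjnt_def by blast
  have fe: "finite e" if "e \<in> M" for e by (rule card_ge_0_finite) (simp add: c2[OF that])
  have "card (\<Union>M) = sum card M" by (rule card_Union_disjoint[OF pw fe])
  also have "\<dots> = sum (\<lambda>_. 2) M" using c2 by (rule sum.cong[OF refl])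
  also have "\<dots> = 2 * card M" by simp
  finally have "card (S - X) = 2 * card M" using M(3) by simp
  moreover have "card S = card X + card (S - X)"
    using X(1) finS by (metis Diff_partition Int_subset_iff card_Un_disjoint Diff_disjoint finite_Diff finite_subset)
  ultimately have "card S + k = 2 * (k + card M)" using X(2) by simp
  then show ?thesis by simp
qed

lemma lip_up: "Suc k \<le> card (tts v) \<Longrightarrow> hgamma v (Suc k) \<le> hgamma v k + 1"
proof -
  assume a: "Suc k \<le> card (tts v)"
  then obtain S where S: "k_feasible v k S" "card S = hgamma v k" using hg_attain[of k] a by auto
  then obtain S' where "k_feasible v (Suc k) S'" "card S' \<le> card S + 1" using feas_up a by blast
  then show ?thesis using hg_le S(2) by fastforce
qed

lemma lip_down: "Suc k \<le> card (tts v) \<Longrightarrow> hgamma v k \<le> hgamma v (Suc k) + 1"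
proof -
  assume a: "Suc k \<le> card (tts v)"
  then obtain S where S: "k_feasible v (Suc k) S" "card S = hgamma v (Suc k)" using hg_attain by blast
  then obtain S' where "k_feasible v k S'" "card S' \<le> card S + 1" using feas_down by blast
  then show ?thesis using hg_le S(2) by fastforce
qed

lemma lip: "a \<le> b \<Longrightarrow> b \<le> card (tts v) \<Longrightarrow>
   hgamma v b \<le> hgamma v a + (b - a) \<and> hgamma v a \<le> hgamma v b + (b - a)"
proof (induction b rule: dec_induct)
  case base
  then show ?case by simp
next
  case (step m)
  then have IH: "hgamma v m \<le> hgamma v a + (m - a) \<and> hgamma v a \<le> hgamma v m + (m - a)" by simp
  have "hgamma v (Suc m) \<le> hgamma v m + 1" "hgamma v m \<le> hgamma v (Suc m) + 1"
    using lip_up lip_down step by auto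
  then show ?case using IH step(1) by auto
qed

lemma hpar: "k \<le> card (tts v) \<Longrightarrow> even (hgamma v k + k)"
  using hg_attain feas_parity by metis

lemma main_result:
  assumes h1: "hgamma v 0 = hmin v + halpha v"
    and h2: "hgamma v (card (tts v)) = hmin v + card (tts v) - hbeta v"
    and h3: "\<And>i::nat. 2 * i \<le> hbeta v - halpha v \<Longrightarrow> hgamma v (halpha v + 2 * i) = hmin v"
  shows "\<forall>k \<le> card (tts v). hgamma v k =
      (if k \<le> halpha v then hmin v + halpha v - k
       else if hbeta v \<le> k then hmin v + k - hbeta v
       else if even (k - halpha v) then hmin v
       else hmin v + 1)"
proof (intro allI impI)
  fix k assume k: "k \<le> card (tts v)"
  define n where "n = card (tts v)"
  define K where "K = {k. k \<le> card (tts v) \<and> hgamma v k = hmin v}"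
  have finI: "finite (hgamma v ` {0..card (tts v)})" by simp
  have neI: "hgamma v ` {0..card (tts v)} \<noteq> {}" by simp
  have "hmin v \<in> hgamma v ` {0..card (tts v)}" unfolding hmin_def using Min_in[OF finI neI] .
  then have neK: "K \<noteq> {}" unfolding K_def by force
  have finK: "finite K" unfolding K_def by simp
  have minle: "hmin v \<le> hgamma v j" if "j \<le> card (tts v)" for j
    unfolding hmin_def using finI that by (intro Min_le) auto
  have aK: "halpha v \<in> K" unfolding halpha_def K_def[symmetric] using Min_in[OF finK neK] .
  have bK: "hbeta v \<in> K" unfolding hbeta_def K_def[symmetric] using Max_in[OF finK neK] .
  have ab: "halpha v \<le> hbeta v" unfolding halpha_def K_def[symmetric] using Min_le[OF finK bK] .
  have ga: "hgamma v (halpha v) = hmin v" and an: "halpha v \<le> card (tts v)" using aK unfolding K_def by auto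
  have gb: "hgamma v (hbeta v) = hmin v" and bn: "hbeta v \<le> card (tts v)" using bK unfolding K_def by auto
  show "hgamma v k =
      (if k \<le> halpha v then hmin v + halpha v - k
       else if hbeta v \<le> k then hmin v + k - hbeta v
       else if even (k - halpha v) then hmin v
       else hmin v + 1)"
  proof (cases "k \<le> halpha v")
    case True
    have "hgamma v (halpha v) \<le> hgamma v k + (halpha v - k) \<and> hgamma v k \<le> hgamma v (halpha v) + (halpha v - k)"
      using lip[OF True an] by blast
    moreover have "hgamma v 0 \<le> hgamma v k + k" using lip[of 0 k] k by simp
    ultimately have "hgamma v k = hmin v + halpha v - k" using True ga h1 by arith
    then show ?thesis using True by simp
  next
    case nA: False
    show ?thesis
    proof (cases "hbeta v \<le> k")
      case True
      have "hgamma v k \<le> hgamma v (hbeta v) + (k - hbeta v)" using lip[OF True k] by blast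
      moreover have "hgamma v k \<le> hgamma v (card (tts v)) + (card (tts v) - k) \<and> hgamma v (card (tts v)) \<le> hgamma v k + (card (tts v) - k)"
        using lip[OF k order.refl] by blast
      ultimately have "hgamma v k = hmin v + k - hbeta v" using True gb h2 bn k by arith
      then show ?thesis using True nA by simp
    next
      case nB: False
      show ?thesis
      proof (cases "even (k - halpha v)")
        case True
        then obtain i where i: "k - halpha v = 2 * i" by blast
        then have "2 * i \<le> hbeta v - halpha v" using nB by simp
        then have "hgamma v (halpha v + 2 * i) = hmin v" by (rule h3)
        moreover have "halpha v + 2 * i = k" using i nA by simp
        ultimately show ?thesis using True nA nB by simp
      next
        case False
        then obtain i where i: "k - halpha v = 2 * i + 1" using oddE by blast
        then have "2 * i \<le> hbeta v - halpha v" using nB by simp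
        then have g1: "hgamma v (halpha v + 2 * i) = hmin v" by (rule h3)
        have kk: "Suc (halpha v + 2 * i) = k" using i nA by simp
        have "hgamma v k \<le> hgamma v (halpha v + 2 * i) + 1" using lip_up[of "halpha v + 2 * i"] kk k by simp
        moreover have "hmin v \<le> hgamma v k" using minle k by simp
        moreover have "even (hgamma v k + k)" using hpar k by simp
        moreover have "even (hmin v + halpha v)" using hpar[OF an] ga by simp
        moreover have "hgamma v k \<noteq> hmin v"
        proof
          assume "hgamma v k = hmin v"
          then have "even (hmin v + k)" using \<open>even (hgamma v k + k)\<close> by simp
          then have "even (hmin v + halpha v + (k - halpha v))" using nA by simp
          then show False using False \<open>even (hmin v + halpha v)\<close> by simp
        qed
        ultimately show ?thesis using nA nB False g1 by simp
      qed
    qed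
  qed
qed

end

theorem corollary1:
  fixes T v :: "'a dtree" and V :: "'a set" and E :: "'a set set"
  assumes "distance_hereditary V E"
    and "is_decomposition_tree T V E"
    and "v \<in> subtrees T" and "is_internal v"
    and "hgamma v 0 = hmin v + halpha v"
    and "hgamma v (card (tts v)) = hmin v + card (tts v) - hbeta v"
    and "\<And>i::nat. 2 * i \<le> hbeta v - halpha v \<Longrightarrow> hgamma v (halpha v + 2 * i) = hmin v"
  shows "\<forall>k \<le> card (tts v). hgamma v k =
      (if k \<le> halpha v then hmin v + halpha v - k
       else if hbeta v \<le> k then hmin v + k - hbeta v
       else if even (k - halpha v) then hmin v
       else hmin v + 1)"
proof -
  have wf: "dt_wf v" using assms(2,3) subtrees_wf unfolding is_decomposition_tree_def by blast
  show ?thesis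
    by (rule main_result[OF tverts_finite tts_sub tedges_form[OF wf] tedges_nbr assms(5,6,7)])
qed

end
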